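(* Let $(e_i)_{i\in\omega}$ be a sequence of events with $<_0$, $\mathrm{Add},\mathrm{Rem},\mathrm{Cnt}$, $\mathrm{val}$, $\chi$ as in the context, and let $\gamma$ be a function. Let FS1$'$ be the property obtained from FS1 by replacing its last clause (there is no event $r$ with $\mathrm{Rem}^1(r)$, $\gamma(r)=\gamma(a)$ and $\gamma(a)<_0 r<_0 a$) by the clause: there is no event $b$ with $\mathrm{Rem}(b)$, $\chi(b)\neq f$, $\gamma(a)<_0 b<_0 a$ and $\mathrm{val}(b)=\mathrm{val}(a)$. Then $\gamma$ satisfies FS0, FS1 and FS2 if and only if $\gamma$ satisfies FS0, FS1$'$ and FS2.
   Context: Setting: an infinite sequence of events $(e_i)_{i\in\omega}$, linearly ordered by $<_0$ where $e_i<_0e_j$ iff $i<j$. Three unary predicates $\mathrm{Add},\mathrm{Rem},\mathrm{Cnt}$ partition the events. Each event $a$ has a key $\mathrm{val}(a)\in\mathbb N$ and a status $\chi(a)\in\{0,1,f\}$, with $\chi(a)\in\{0,1\}$ whenever $\mathrm{Cnt}(a)$. Notation: for $p\in\{0,1,f\}$, $\mathrm{Add}^p(a)$ abbreviates $\mathrm{Add}(a)\wedge\chi(a)=p$, and $\mathrm{Rem}^p(a)$ similarly; $\mathrm{Cnt}^p$ similarly for $p\in\{0,1\}$; for $p\in\{0,1\}$, $\mathrm{Op}^p(a)$ abbreviates $(\mathrm{Add}(a)\vee\mathrm{Rem}(a)\vee\mathrm{Cnt}(a))\wedge\chi(a)=p$. FS0: $<_0$ is a linear ordering of the events; $\mathrm{Add},\mathrm{Rem},\mathrm{Cnt}$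 are pairwise disjoint; $\gamma$ is defined on the set of $\mathrm{Op}^1$ events and its values are $\mathrm{Add}^0$ events. FS1: for every event $a$ with $\mathrm{Op}^1(a)$: $\gamma(a)<_0 a$, $\mathrm{Add}^0(\gamma(a))$, $\mathrm{val}(a)=\mathrm{val}(\gamma(a))$, and there is no event $r$ with $\mathrm{Rem}^1(r)$, $\gamma(r)=\gamma(a)$ and $\gamma(a)<_0 r<_0 a$. FS2: for all events $a<_0 b$ with $\mathrm{Add}^0(a)$ and $\mathrm{Op}^0(b)$: if $\mathrm{val}(a)=\mathrm{val}(b)$ then there is an event $r$ with $a<_0 r<_0 b$, $\mathrm{Rem}^1(r)$ and $a=\gamma(r)$. *)

theory Defs
  imports Main
begin

text \<open>Events are the natural numbers (event e_i is i), and the order <_0 is the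
  usual order on nat. Status values: S0, S1, Sf (the status f).\<close>

datatype status = S0 | S1 | Sf

definition Op :: "(nat \<Rightarrow> bool) \<Rightarrow> (nat \<Rightarrow> bool) \<Rightarrow> (nat \<Rightarrow> bool) \<Rightarrow> (nat \<Rightarrow> status)
    \<Rightarrow> status \<Rightarrow> nat \<Rightarrow> bool" where
  "Op Add Rem Cnt \<chi> p a \<longleftrightarrow> (Add a \<or> Rem a \<or> Cnt a) \<and> \<chi> a = p"

definition FS0 :: "(nat \<Rightarrow> bool) \<Rightarrow> (nat \<Rightarrow> bool) \<Rightarrow> (nat \<Rightarrow> bool) \<Rightarrow> (nat \<Rightarrow> status)
    \<Rightarrow> (nat \<Rightarrow> nat) \<Rightarrow> bool" where
  "FS0 Add Rem Cnt \<chi> \<gamma> \<longleftrightarrow>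
     (\<forall>a. \<not> (Add a \<and> Rem a) \<and> \<not> (Add a \<and> Cnt a) \<and> \<not> (Rem a \<and> Cnt a)) \<and>
     (\<forall>a. Op Add Rem Cnt \<chi> S1 a \<longrightarrow> Add (\<gamma> a) \<and> \<chi> (\<gamma> a) = S0)"

definition FS1 :: "(nat \<Rightarrow> bool) \<Rightarrow> (nat \<Rightarrow> bool) \<Rightarrow> (nat \<Rightarrow> bool) \<Rightarrow> (nat \<Rightarrow> nat)
    \<Rightarrow> (nat \<Rightarrow> status) \<Rightarrow> (nat \<Rightarrow> nat) \<Rightarrow> bool" where
  "FS1 Add Rem Cnt val \<chi> \<gamma> \<longleftrightarrow>
     (\<forall>a. Op Add Rem Cnt \<chi> S1 a \<longrightarrow>
        \<gamma> a < a \<and> Add (\<gamma> a) \<and> \<chi> (\<gamma> a) = S0 \<and> val a = val (\<gamma> a) \<and>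
        \<not> (\<exists>r. Rem r \<and> \<chi> r = S1 \<and> \<gamma> r = \<gamma> a \<and> \<gamma> a < r \<and> r < a))"

definition FS1' :: "(nat \<Rightarrow> bool) \<Rightarrow> (nat \<Rightarrow> bool) \<Rightarrow> (nat \<Rightarrow> bool) \<Rightarrow> (nat \<Rightarrow> nat)
    \<Rightarrow> (nat \<Rightarrow> status) \<Rightarrow> (nat \<Rightarrow> nat) \<Rightarrow> bool" where
  "FS1' Add Rem Cnt val \<chi> \<gamma> \<longleftrightarrow>
     (\<forall>a. Op Add Rem Cnt \<chi> S1 a \<longrightarrow>
        \<gamma> a < a \<and> Add (\<gamma> a) \<and> \<chi> (\<gamma> a) = S0 \<and> val a = val (\<gamma> a) \<and>
        \<not> (\<exists>b. Rem b \<and> \<chi> b \<noteq> Sf \<and> \<gamma> a < b \<and> b < a \<and> val b = val a))"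

definition FS2 :: "(nat \<Rightarrow> bool) \<Rightarrow> (nat \<Rightarrow> bool) \<Rightarrow> (nat \<Rightarrow> bool) \<Rightarrow> (nat \<Rightarrow> nat)
    \<Rightarrow> (nat \<Rightarrow> status) \<Rightarrow> (nat \<Rightarrow> nat) \<Rightarrow> bool" where
  "FS2 Add Rem Cnt val \<chi> \<gamma> \<longleftrightarrow>
     (\<forall>a b. a < b \<and> Add a \<and> \<chi> a = S0 \<and> Op Add Rem Cnt \<chi> S0 b \<and> val a = val b \<longrightarrow>
        (\<exists>r. a < r \<and> r < b \<and> Rem r \<and> \<chi> r = S1 \<and> a = \<gamma> r))"

end

theory Submission
  imports Defs
begin

theorem lemma2p2:
  fixes Add Rem Cnt :: "nat \<Rightarrow> bool" and val :: "nat \<Rightarrow> nat"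
    and \<chi> :: "nat \<Rightarrow> status" and \<gamma> :: "nat \<Rightarrow> nat"
  assumes partition: "\<forall>a. Add a \<or> Rem a \<or> Cnt a"
    and disj: "\<forall>a. \<not> (Add a \<and> Rem a) \<and> \<not> (Add a \<and> Cnt a) \<and> \<not> (Rem a \<and> Cnt a)"
    and cnt: "\<forall>a. Cnt a \<longrightarrow> \<chi> a \<noteq> Sf"
  shows "(FS0 Add Rem Cnt \<chi> \<gamma> \<and> FS1 Add Rem Cnt val \<chi> \<gamma> \<and> FS2 Add Rem Cnt val \<chi> \<gamma>)
     \<longleftrightarrow> (FS0 Add Rem Cnt \<chi> \<gamma> \<and> FS1' Add Rem Cnt val \<chi> \<gamma> \<and> FS2 Add Rem Cnt val \<chi> \<gamma>)"
proof
  assume H: "FS0 Add Rem Cnt \<chi> \<gamma> \<and> FS1 Add Rem Cnt val \<chi> \<gamma> \<and> FS2 Add Rem Cnt val \<chi> \<gamma>"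
  have F1: "\<And>a. Op Add Rem Cnt \<chi> S1 a \<Longrightarrow>
        \<gamma> a < a \<and> Add (\<gamma> a) \<and> \<chi> (\<gamma> a) = S0 \<and> val a = val (\<gamma> a) \<and>
        \<not> (\<exists>r. Rem r \<and> \<chi> r = S1 \<and> \<gamma> r = \<gamma> a \<and> \<gamma> a < r \<and> r < a)"
    using H unfolding FS1_def by blast
  have F2: "\<And>a b. a < b \<Longrightarrow> Add a \<Longrightarrow> \<chi> a = S0 \<Longrightarrow> Op Add Rem Cnt \<chi> S0 b \<Longrightarrow> val a = val b \<Longrightarrow>
        (\<exists>r. a < r \<and> r < b \<and> Rem r \<and> \<chi> r = S1 \<and> a = \<gamma> r)"
    using H unfolding FS2_def by blast
  have "FS1' Add Rem Cnt val \<chi> \<gamma>"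
    unfolding FS1'_def
  proof (intro allI impI)
    fix a assume a: "Op Add Rem Cnt \<chi> S1 a"
    note A = F1[OF a]
    show "\<gamma> a < a \<and> Add (\<gamma> a) \<and> \<chi> (\<gamma> a) = S0 \<and> val a = val (\<gamma> a) \<and>
        \<not> (\<exists>b. Rem b \<and> \<chi> b \<noteq> Sf \<and> \<gamma> a < b \<and> b < a \<and> val b = val a)"
    proof (intro conjI)
      show "\<not> (\<exists>b. Rem b \<and> \<chi> b \<noteq> Sf \<and> \<gamma> a < b \<and> b < a \<and> val b = val a)"
      proof
        assume "\<exists>b. Rem b \<and> \<chi> b \<noteq> Sf \<and> \<gamma> a < b \<and> b < a \<and> val b = val a"
        then obtain b where b: "Rem b" "\<chi> b \<noteq> Sf" "\<gamma> a < b" "b < a" "val b = val a" by blast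
        show False
        proof (cases "\<chi> b")
          case S0
          then have "Op Add Rem Cnt \<chi> S0 b" using b unfolding Op_def by simp
          from F2[OF b(3) _ _ this] A b obtain r where
            "\<gamma> a < r \<and> r < b \<and> Rem r \<and> \<chi> r = S1 \<and> \<gamma> a = \<gamma> r" by auto
          then show False using A b by auto
        next
          case S1
          then have ob: "Op Add Rem Cnt \<chi> S1 b" using b unfolding Op_def by simp
          note B = F1[OF ob]
          consider "\<gamma> b = \<gamma> a" | "\<gamma> b < \<gamma> a" | "\<gamma> a < \<gamma> b" by linarith
          then show False
          proof cases
            case 1 then show ?thesis using A b S1 by auto
          next
            case 2
            have "Op Add Rem Cnt \<chi> S0 (\<gamma> a)" using A unfolding Op_def by simp
            from F2[OF 2 _ _ this] A B b obtain r where
              "\<gamma> b < r \<and> r < \<gamma> a \<and> Rem r \<and> \<chi> r = S1 \<and> \<gamma> b = \<gamma> r" by auto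
            then show False using A B b by auto
          next
            case 3
            have "Op Add Rem Cnt \<chi> S0 (\<gamma> b)" using B unfolding Op_def by simp
            from F2[OF 3 _ _ this] A B b obtain r where
              "\<gamma> a < r \<and> r < \<gamma> b \<and> Rem r \<and> \<chi> r = S1 \<and> \<gamma> a = \<gamma> r" by auto
            then show False using A B b by auto
          qed
        next
          case Sf then show False using b by simp
        qed
      qed
    qed (use A in auto)
  qed
  then show "FS0 Add Rem Cnt \<chi> \<gamma> \<and> FS1' Add Rem Cnt val \<chi> \<gamma> \<and> FS2 Add Rem Cnt val \<chi> \<gamma>"
    using H by blast
next
  assume H: "FS0 Add Rem Cnt \<chi> \<gamma> \<and> FS1' Add Rem Cnt val \<chi> \<gamma> \<and> FS2 Add Rem Cnt val \<chi> \<gamma>"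
  have F1: "\<And>a. Op Add Rem Cnt \<chi> S1 a \<Longrightarrow>
        \<gamma> a < a \<and> Add (\<gamma> a) \<and> \<chi> (\<gamma> a) = S0 \<and> val a = val (\<gamma> a) \<and>
        \<not> (\<exists>b. Rem b \<and> \<chi> b \<noteq> Sf \<and> \<gamma> a < b \<and> b < a \<and> val b = val a)"
    using H unfolding FS1'_def by blast
  have "FS1 Add Rem Cnt val \<chi> \<gamma>"
    unfolding FS1_def
  proof (intro allI impI conjI)
    fix a assume a: "Op Add Rem Cnt \<chi> S1 a"
    note A = F1[OF a]
    show "\<gamma> a < a" "Add (\<gamma> a)" "\<chi> (\<gamma> a) = S0" "val a = val (\<gamma> a)" using A by auto
    show "\<not> (\<exists>r. Rem r \<and> \<chi> r = S1 \<and> \<gamma> r = \<gamma> a \<and> \<gamma> a < r \<and> r < a)"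
    proof
      assume "\<exists>r. Rem r \<and> \<chi> r = S1 \<and> \<gamma> r = \<gamma> a \<and> \<gamma> a < r \<and> r < a"
      then obtain r where r: "Rem r" "\<chi> r = S1" "\<gamma> r = \<gamma> a" "\<gamma> a < r" "r < a" by blast
      have "Op Add Rem Cnt \<chi> S1 r" using r unfolding Op_def by simp
      note R = F1[OF this]
      have "val r = val a" using R A r by simp
      then show False using A r by auto
    qed
  qed
  then show "FS0 Add Rem Cnt \<chi> \<gamma> \<and> FS1 Add Rem Cnt val \<chi> \<gamma> \<and> FS2 Add Rem Cnt val \<chi> \<gamma>"
    using H by blast
qed

end
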